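(* Let $(\mathbf{x}_i,y_i)_{i=1}^n\subset\mathbb{R}^d\times\{\pm1\}$ satisfy $\|\mathbf{x}_i\|\le1$ and $y_i\mathbf{x}_i^\top\mathbf{w}_*\ge\gamma$ for some $\gamma>0$ and unit vector $\mathbf{w}_*$. Let $L(\mathbf{w})=\frac1n\sum_i\ln(1+\exp(-y_i\mathbf{x}_i^\top\mathbf{w}))$ and run GD $\mathbf{w}_{t+1}=\mathbf{w}_t-\eta\nabla L(\mathbf{w}_t)$ with any $\eta>0$ and any $\mathbf{w}_0$. For any $\mathbf{u}_1\in\mathbb{R}^d$, let $\mathbf{u}_2=\frac{\eta}{2\gamma}\mathbf{w}_*$ and $\mathbf{u}=\mathbf{u}_1+\mathbf{u}_2$. Then for all $t\ge1$, \[\frac{\|\mathbf{w}_t-\mathbf{u}\|^2}{2\eta t}+\frac1t\sum_{k=0}^{t-1}L(\mathbf{w}_k)\le L(\mathbf{u}_1)+\frac{\|\mathbf{w}_0-\mathbf{u}\|^2}{2\eta t}.\] *)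

theory Defs
  imports "HOL-Analysis.Analysis"
begin

definition logistic_loss :: "nat \<Rightarrow> (nat \<Rightarrow> 'a::euclidean_space) \<Rightarrow> (nat \<Rightarrow> real) \<Rightarrow> 'a \<Rightarrow> real" where
  "logistic_loss n x y w = (1 / real n) * (\<Sum>i<n. ln (1 + exp (- (y i * (x i \<bullet> w)))))"

end

theory Submission imports Defs begin

definition lf :: "real \<Rightarrow> real" where "lf z = ln (1 + exp (- z))"
definition lf' :: "real \<Rightarrow> real" where "lf' z = - (1 / (1 + exp z))"

lemma lf_deriv: "DERIV lf z :> lf' z"
proof -
  have "DERIV lf z :> (1 / (1 + exp (-z))) * (exp (-z) * (-1))"
    unfolding lf_def
    by (auto intro!: derivative_eq_intros simp: add_pos_pos)
  moreover have "(1 / (1 + exp (-z))) * (exp (-z) * (-1)) = lf' z"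
    unfolding lf'_def by (simp add: exp_minus field_simps)
  ultimately show ?thesis by simp
qed

lemma lf'_mono: "a \<le> b \<Longrightarrow> lf' a \<le> lf' b"
  unfolding lf'_def by (simp add: frac_le add_pos_pos)

lemma lf_tangent: "lf b \<ge> lf a + lf' a * (b - a)"
proof (cases a b rule: linorder_cases)
  case less
  from MVT2[OF less lf_deriv] obtain c where c: "a < c" "lf b - lf a = (b - a) * lf' c" by blast
  have "lf' a \<le> lf' c" using c lf'_mono by simp
  hence "(b - a) * lf' a \<le> (b - a) * lf' c" using less by (intro mult_left_mono) auto
  then show ?thesis using c by (simp add: algebra_simps)
next
  case equal then show ?thesis by simp
next
  case greater
  from MVT2[OF greater lf_deriv] obtain c where c: "c < a" "lf a - lf b = (a - b) * lf' c" by blast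
  have "lf' c \<le> lf' a" using c lf'_mono by simp
  hence "(a - b) * lf' c \<le> (a - b) * lf' a" using greater by (intro mult_left_mono) auto
  then show ?thesis using c by (simp add: algebra_simps)
qed

definition Gf :: "nat \<Rightarrow> (nat \<Rightarrow> 'a::euclidean_space) \<Rightarrow> (nat \<Rightarrow> real) \<Rightarrow> 'a \<Rightarrow> 'a" where
  "Gf n x y w = (1 / real n) *\<^sub>R (\<Sum>i<n. (lf' (y i * (x i \<bullet> w)) * y i) *\<^sub>R x i)"

definition Sf :: "nat \<Rightarrow> (nat \<Rightarrow> 'a::euclidean_space) \<Rightarrow> (nat \<Rightarrow> real) \<Rightarrow> 'a \<Rightarrow> real" where
  "Sf n x y w = (1 / real n) * (\<Sum>i<n. - lf' (y i * (x i \<bullet> w)))"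

lemma loss_eq: "logistic_loss n x y w = (1 / real n) * (\<Sum>i<n. lf (y i * (x i \<bullet> w)))"
  unfolding logistic_loss_def lf_def by simp

lemma L_deriv: "(logistic_loss n x y has_derivative (\<lambda>h. Gf n x y w \<bullet> h)) (at w)"
proof -
  have t: "((\<lambda>v. lf (y i * (x i \<bullet> v))) has_derivative (\<lambda>h. (y i * (x i \<bullet> h)) * lf' (y i * (x i \<bullet> w)))) (at w)" for i
    by (rule DERIV_compose_FDERIV[OF lf_deriv]) (auto intro!: derivative_eq_intros)
  have "((\<lambda>v. (1 / real n) * (\<Sum>i<n. lf (y i * (x i \<bullet> v)))) has_derivative
        (\<lambda>h. (1 / real n) * (\<Sum>i<n. (y i * (x i \<bullet> h)) * lf' (y i * (x i \<bullet> w))))) (at w)"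
    by (intro has_derivative_mult_right has_derivative_sum t)
  moreover have "(\<lambda>h. (1 / real n) * (\<Sum>i<n. (y i * (x i \<bullet> h)) * lf' (y i * (x i \<bullet> w)))) = (\<lambda>h. Gf n x y w \<bullet> h)"
    unfolding Gf_def by (auto simp: inner_sum_left algebra_simps intro!: sum.cong)
  moreover have "(\<lambda>v. (1 / real n) * (\<Sum>i<n. lf (y i * (x i \<bullet> v)))) = logistic_loss n x y"
    by (simp add: fun_eq_iff loss_eq)
  ultimately show ?thesis by simp
qed

lemma L_convex: "logistic_loss n x y u \<ge> logistic_loss n x y w + Gf n x y w \<bullet> (u - w)"
proof -
  have "Gf n x y w \<bullet> (u - w) = (1 / real n) * (\<Sum>i<n. lf' (y i * (x i \<bullet> w)) * (y i * (x i \<bullet> u) - y i * (x i \<bullet> w)))"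
  proof -
    have gv: "Gf n x y w \<bullet> v = (1 / real n) * (\<Sum>i<n. lf' (y i * (x i \<bullet> w)) * (y i * (x i \<bullet> v)))" for v
      unfolding Gf_def by (auto simp: inner_sum_left algebra_simps intro!: sum.cong)
    show ?thesis unfolding inner_diff_right gv right_diff_distrib sum_subtractf by simp
  qed
  moreover have h: "(\<Sum>i<n. lf (y i * (x i \<bullet> w))) + (\<Sum>i<n. lf' (y i * (x i \<bullet> w)) * (y i * (x i \<bullet> u) - y i * (x i \<bullet> w)))
     \<le> (\<Sum>i<n. lf (y i * (x i \<bullet> u)))"
    unfolding sum.distrib[symmetric] by (intro sum_mono lf_tangent)
  have "((\<Sum>i<n. lf (y i * (x i \<bullet> w))) + (\<Sum>i<n. lf' (y i * (x i \<bullet> w)) * (y i * (x i \<bullet> u) - y i * (x i \<bullet> w)))) / real n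
     \<le> (\<Sum>i<n. lf (y i * (x i \<bullet> u))) / real n"
    by (rule divide_right_mono[OF h]) simp
  ultimately show ?thesis unfolding loss_eq
    by (simp add: add_divide_distrib)
qed

lemma lf'_bounds: "- 1 \<le> lf' z" "lf' z \<le> 0"
  unfolding lf'_def by (auto simp: add_pos_pos)

lemma G_norm:
  assumes labels: "\<And>i. i < n \<Longrightarrow> y i \<in> {-1, 1}"
    and norm_x: "\<And>i. i < n \<Longrightarrow> norm (x i) \<le> 1"
  shows "norm (Gf n x y w) \<le> Sf n x y w"
proof -
  have "norm (\<Sum>i<n. (lf' (y i * (x i \<bullet> w)) * y i) *\<^sub>R x i) \<le> (\<Sum>i<n. norm ((lf' (y i * (x i \<bullet> w)) * y i) *\<^sub>R x i))"
    by (rule norm_sum)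
  also have "\<dots> \<le> (\<Sum>i<n. - lf' (y i * (x i \<bullet> w)))"
  proof (rule sum_mono)
    fix i assume "i \<in> {..<n}"
    hence i: "i < n" by simp
    have "\<bar>y i\<bar> = 1" using labels[OF i] by auto
    hence "norm ((lf' (y i * (x i \<bullet> w)) * y i) *\<^sub>R x i) = \<bar>lf' (y i * (x i \<bullet> w))\<bar> * norm (x i)"
      by (simp add: abs_mult)
    also have "\<dots> \<le> \<bar>lf' (y i * (x i \<bullet> w))\<bar> * 1"
      by (intro mult_left_mono norm_x[OF i]) simp
    also have "\<dots> = - lf' (y i * (x i \<bullet> w))" using lf'_bounds(2)[of "y i * (x i \<bullet> w)"] by simp
    finally show "norm ((lf' (y i * (x i \<bullet> w)) * y i) *\<^sub>R x i) \<le> - lf' (y i * (x i \<bullet> w))" .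
  qed
  finally show ?thesis unfolding Gf_def Sf_def
    by (simp add: divide_right_mono)
qed

lemma S_bounds:
  assumes "n \<ge> 1"
  shows "Sf n x y w \<le> 1" "0 \<le> Sf n x y w"
proof -
  have "(\<Sum>i<n. - lf' (y i * (x i \<bullet> w))) \<le> (\<Sum>i<n. 1)"
    by (intro sum_mono) (use lf'_bounds in auto)
  hence "(\<Sum>i<n. - lf' (y i * (x i \<bullet> w))) \<le> real n" by simp
  thus "Sf n x y w \<le> 1" unfolding Sf_def using assms by (simp add: divide_le_eq)
  have "0 \<le> (\<Sum>i<n. - lf' (y i * (x i \<bullet> w)))"
    by (intro sum_nonneg) (use lf'_bounds in auto)
  thus "0 \<le> Sf n x y w" unfolding Sf_def by simp
qed

lemma G_margin:
  assumes margin: "\<And>i. i < n \<Longrightarrow> y i * (x i \<bullet> wstar) \<ge> gamma"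
  shows "Gf n x y w \<bullet> wstar \<le> - gamma * Sf n x y w"
proof -
  have "(\<Sum>i<n. lf' (y i * (x i \<bullet> w)) * (y i * (x i \<bullet> wstar))) \<le> (\<Sum>i<n. lf' (y i * (x i \<bullet> w)) * gamma)"
  proof (rule sum_mono)
    fix i assume "i \<in> {..<n}"
    then show "lf' (y i * (x i \<bullet> w)) * (y i * (x i \<bullet> wstar)) \<le> lf' (y i * (x i \<bullet> w)) * gamma"
      by (intro mult_left_mono_neg margin lf'_bounds) auto
  qed
  hence "(\<Sum>i<n. lf' (y i * (x i \<bullet> w)) * (y i * (x i \<bullet> wstar))) / real n \<le> (\<Sum>i<n. lf' (y i * (x i \<bullet> w)) * gamma) / real n"
    by (rule divide_right_mono) simp
  moreover have "Gf n x y w \<bullet> wstar = (\<Sum>i<n. lf' (y i * (x i \<bullet> w)) * (y i * (x i \<bullet> wstar))) / real n"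
    unfolding Gf_def by (auto simp: inner_sum_left algebra_simps intro!: sum.cong)
  moreover have "- gamma * Sf n x y w = (\<Sum>i<n. lf' (y i * (x i \<bullet> w)) * gamma) / real n"
    unfolding Sf_def by (simp add: sum_distrib_right sum_distrib_left sum_divide_distrib sum_negf algebra_simps)
  ultimately show ?thesis by simp
qed

theorem mainTheorem10:
  fixes n :: nat and x :: "nat \<Rightarrow> 'a::euclidean_space" and y :: "nat \<Rightarrow> real"
    and wstar u1 :: 'a and gamma eta :: real
    and w g :: "nat \<Rightarrow> 'a" and t :: nat
  assumes n_pos: "n \<ge> 1"
    and labels: "\<And>i. i < n \<Longrightarrow> y i \<in> {-1, 1}"
    and norm_x: "\<And>i. i < n \<Longrightarrow> norm (x i) \<le> 1"
    and gamma_pos: "gamma > 0"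
    and unit: "norm wstar = 1"
    and margin: "\<And>i. i < n \<Longrightarrow> y i * (x i \<bullet> wstar) \<ge> gamma"
    and eta_pos: "eta > 0"
    and grad: "\<And>k. (logistic_loss n x y has_derivative (\<lambda>h. g k \<bullet> h)) (at (w k))"
    and gd: "\<And>k. w (Suc k) = w k - eta *\<^sub>R g k"
    and t_pos: "t \<ge> 1"
  shows "(norm (w t - (u1 + (eta / (2 * gamma)) *\<^sub>R wstar)))\<^sup>2 / (2 * eta * real t)
           + (1 / real t) * (\<Sum>k<t. logistic_loss n x y (w k))
         \<le> logistic_loss n x y u1
           + (norm (w 0 - (u1 + (eta / (2 * gamma)) *\<^sub>R wstar)))\<^sup>2 / (2 * eta * real t)"
proof -
  define L where "L = logistic_loss n x y"
  define c where "c = eta / (2 * gamma)"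
  define u where "u = u1 + c *\<^sub>R wstar"
  define D where "D k = (norm (w k - u))\<^sup>2" for k
  have gk: "g k = Gf n x y (w k)" for k
  proof -
    have "(\<lambda>h. g k \<bullet> h) = (\<lambda>h. Gf n x y (w k) \<bullet> h)"
      by (rule has_derivative_unique[OF grad L_deriv])
    hence "g k \<bullet> (g k - Gf n x y (w k)) = Gf n x y (w k) \<bullet> (g k - Gf n x y (w k))"
      by metis
    hence "(g k - Gf n x y (w k)) \<bullet> (g k - Gf n x y (w k)) = 0"
      by (simp add: inner_diff_left)
    thus ?thesis by simp
  qed
  have step: "D (Suc k) \<le> D k - 2 * eta * (L (w k) - L u1)" for k
  proof -
    define S where "S = Sf n x y (w k)"
    have cvx: "L u1 \<ge> L (w k) + g k \<bullet> (u1 - w k)" unfolding L_def gk by (rule L_convex)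
    have mg: "g k \<bullet> wstar \<le> - gamma * S" unfolding gk S_def by (rule G_margin[OF margin])
    have ng: "norm (g k) \<le> S" unfolding gk S_def by (rule G_norm[OF labels norm_x])
    have S1: "S \<le> 1" "0 \<le> S" unfolding S_def using S_bounds[OF n_pos] by auto
    have ng2: "(norm (g k))\<^sup>2 \<le> S"
    proof -
      have "(norm (g k))\<^sup>2 \<le> S\<^sup>2" using ng by (intro power_mono) auto
      also have "\<dots> \<le> S" using mult_left_le[OF S1(1) S1(2)] by (simp add: power2_eq_square)
      finally show ?thesis .
    qed
    have cpos: "c > 0" unfolding c_def using eta_pos gamma_pos by simp
    have "c * (g k \<bullet> wstar) \<le> c * (- gamma * S)" using mg cpos by (intro mult_left_mono) auto
    also have "c * (- gamma * S) = - eta * S / 2" unfolding c_def using gamma_pos by (simp add: field_simps)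
    finally have mg2: "c * (g k \<bullet> wstar) \<le> - eta * S / 2" .
    have eq: "D (Suc k) = D k - 2 * eta * (g k \<bullet> (w k - u1)) + 2 * eta * (c * (g k \<bullet> wstar)) + eta\<^sup>2 * (norm (g k))\<^sup>2"
    proof -
      have nd: "(norm (a - b))\<^sup>2 = (norm a)\<^sup>2 - 2 * (a \<bullet> b) + (norm b)\<^sup>2" for a b :: 'a
        by (simp add: power2_norm_eq_inner inner_diff_left inner_diff_right inner_commute)
      have e1: "w (Suc k) - u = (w k - u) - eta *\<^sub>R g k" by (simp add: gd)
      have e2: "(w k - u) \<bullet> (eta *\<^sub>R g k) = eta * (g k \<bullet> (w k - u1)) - eta * (c * (g k \<bullet> wstar))"
        unfolding u_def by (simp add: inner_diff_left inner_add_left inner_commute algebra_simps)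
      have e3: "(norm (eta *\<^sub>R g k))\<^sup>2 = eta\<^sup>2 * (norm (g k))\<^sup>2"
        using eta_pos by (simp add: power_mult_distrib)
      show ?thesis unfolding D_def e1 nd e2 e3 by (simp add: algebra_simps)
    qed
    have a1: "2 * eta * (c * (g k \<bullet> wstar)) \<le> 2 * eta * (- eta * S / 2)"
      using mg2 eta_pos by (intro mult_left_mono) auto
    have a2: "eta\<^sup>2 * (norm (g k))\<^sup>2 \<le> eta\<^sup>2 * S" using ng2 by (intro mult_left_mono) auto
    have a3: "2 * eta * (L (w k) - L u1) \<le> 2 * eta * (g k \<bullet> (w k - u1))"
    proof -
      have "g k \<bullet> (w k - u1) = - (g k \<bullet> (u1 - w k))" by (simp add: inner_diff_right)
      hence "L (w k) - L u1 \<le> g k \<bullet> (w k - u1)" using cvx by linarith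
      thus ?thesis using eta_pos by (intro mult_left_mono) auto
    qed
    have "2 * eta * (- eta * S / 2) + eta\<^sup>2 * S = 0" by (simp add: power2_eq_square)
    thus ?thesis using eq a1 a2 a3 by linarith
  qed
  have main: "D m + 2 * eta * (\<Sum>k<m. L (w k)) \<le> D 0 + 2 * eta * real m * L u1" for m
  proof (induction m)
    case 0 then show ?case by simp
  next
    case (Suc m)
    have "D (Suc m) + 2 * eta * (\<Sum>k<Suc m. L (w k)) = D (Suc m) + 2 * eta * L (w m) + 2 * eta * (\<Sum>k<m. L (w k))"
      by (simp add: algebra_simps)
    also have "\<dots> \<le> D m + 2 * eta * L u1 + 2 * eta * (\<Sum>k<m. L (w k))"
      using step[of m] by (simp add: algebra_simps)
    also have "\<dots> \<le> D 0 + 2 * eta * real (Suc m) * L u1"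
      using Suc.IH by (simp add: algebra_simps)
    finally show ?case .
  qed
  have tp: "2 * eta * real t > 0" using eta_pos t_pos by simp
  have "(D t + 2 * eta * (\<Sum>k<t. L (w k))) / (2 * eta * real t) \<le> (D 0 + 2 * eta * real t * L u1) / (2 * eta * real t)"
    using main[of t] tp by (intro divide_right_mono) auto
  moreover have "(D t + 2 * eta * (\<Sum>k<t. L (w k))) / (2 * eta * real t) = D t / (2 * eta * real t) + (1 / real t) * (\<Sum>k<t. L (w k))"
    using eta_pos t_pos by (simp add: field_simps)
  moreover have "(D 0 + 2 * eta * real t * L u1) / (2 * eta * real t) = L u1 + D 0 / (2 * eta * real t)"
    using eta_pos t_pos by (simp add: field_simps)
  ultimately show ?thesis unfolding D_def u_def c_def L_def by simp
qed


end
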